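(* Consider binary operation $\wedge$ on $\{0,1\}$ defined by $1\wedge1=1\wedge0=0\wedge0=1$ and $0\wedge1=0$ (i.e. $a\wedge b=a^b$ with $0^0=1$). For $n\ge0$, the number of complete bracketings of the word $0\wedge0\wedge\cdots\wedge0$ with $n+1$ zeroes (i.e. full binary parenthesizations) whose value is $1$ equals the number of walks $0=y_0,y_1,\dots,y_n=2$ with steps $y_i-y_{i-1}\in\{-2,-1,1,2\}$ and $y_i\ge1$ for all $1\le i\le n$. *)

theory Defs
  imports Main
begin

definition wop :: "bool \<Rightarrow> bool \<Rightarrow> bool" where
  "wop a b = (a \<or> \<not> b)"

text \<open>Complete bracketings (full binary parenthesizations) of a word whose letters are all 0.\<close>
datatype brk = Leaf | Node brk brk

fun leaves :: "brk \<Rightarrow> nat" where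
  "leaves Leaf = 1"
| "leaves (Node l r) = leaves l + leaves r"

text \<open>Value of the bracketing, every letter being 0 (False = 0, True = 1).\<close>
fun val :: "brk \<Rightarrow> bool" where
  "val Leaf = False"
| "val (Node l r) = wop (val l) (val r)"

definition walks :: "nat \<Rightarrow> int list set" where
  "walks n = {ys. length ys = n + 1 \<and> ys ! 0 = 0 \<and> ys ! n = 2
     \<and> (\<forall>i\<in>{1..n}. ys ! i - ys ! (i - 1) \<in> {-2, -1, 1, 2} \<and> ys ! i \<ge> 1)}"

end

theory Submission
  imports Defs "HOL-Computational_Algebra.Formal_Power_Series"
begin

section \<open>Trees\<close>

lemma leaves_pos: "leaves t \<ge> 1"
  by (induction t) auto

definition trs :: "nat \<Rightarrow> brk set" where
  "trs m = {t. leaves t = m}"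

lemma trs_split:
  "trs m \<subseteq> {Leaf} \<union> (\<Union>i\<in>{1..<m}. case_prod Node ` (trs i \<times> trs (m - i)))"
proof
  fix t assume "t \<in> trs m"
  then show "t \<in> {Leaf} \<union> (\<Union>i\<in>{1..<m}. case_prod Node ` (trs i \<times> trs (m - i)))"
  proof (cases t)
    case (Node l r)
    with \<open>t \<in> trs m\<close> have "leaves l + leaves r = m" by (simp add: trs_def)
    moreover have "leaves l \<ge> 1" "leaves r \<ge> 1" by (rule leaves_pos)+
    ultimately have "leaves l \<in> {1..<m}" "(l, r) \<in> trs (leaves l) \<times> trs (m - leaves l)"
      by (auto simp: trs_def)
    then show ?thesis using Node
      by (intro UnI2 UN_I[where a="leaves l"] image_eqI[where x="(l,r)"]) simp_all
  qed simp
qed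

lemma finite_trs: "finite (trs m)"
proof (induction m rule: less_induct)
  case (less m)
  have f1: "finite (trs i)" "finite (trs (m - i))" if "i \<in> {1..<m}" for i
    using less that by auto
  have "finite ({Leaf} \<union> (\<Union>i\<in>{1..<m}. case_prod Node ` (trs i \<times> trs (m - i))))"
    using f1 by (intro finite_UnI finite_UN_I finite_imageI finite_cartesian_product) auto
  then show ?case using trs_split finite_subset by blast
qed

definition S :: "bool \<Rightarrow> nat \<Rightarrow> brk set" where
  "S v n = {t. leaves t = n + 1 \<and> val t = v}"

definition cnt :: "bool \<Rightarrow> nat \<Rightarrow> nat" where
  "cnt v n = card (S v n)"

lemma finite_S: "finite (S v n)"
  by (rule finite_subset[OF _ finite_trs[of "n+1"]]) (auto simp: S_def trs_def)

lemma S0_mem: "t \<in> S v 0 \<longleftrightarrow> t = Leaf \<and> \<not> v"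
proof (cases t)
  case Leaf
  then show ?thesis by (auto simp: S_def)
next
  case (Node l r)
  have "leaves l \<ge> 1" "leaves r \<ge> 1" by (rule leaves_pos)+
  then show ?thesis using Node by (simp add: S_def)
qed

lemma S0: "S v 0 = (if v then {} else {Leaf})"
  by (rule set_eqI) (simp add: S0_mem)

lemma cnt0: "cnt True 0 = 0" "cnt False 0 = 1"
  by (simp_all add: cnt_def S0)

lemma S_Suc:
  "S v (Suc n) = case_prod Node ` (\<Union>i\<in>{..n}. \<Union>p\<in>UNIV. \<Union>q\<in>UNIV.
      (if wop p q = v then S p i \<times> S q (n - i) else {}))"
proof (intro equalityI subsetI)
  fix t assume t: "t \<in> S v (Suc n)"
  then obtain l r where tn: "t = Node l r"
    by (cases t) (simp_all add: S_def)
  have "leaves l \<ge> 1" "leaves r \<ge> 1" by (rule leaves_pos)+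
  moreover have "leaves l + leaves r = n + 2" "wop (val l) (val r) = v" using t tn by (simp_all add: S_def)
  ultimately have "leaves l - 1 \<le> n" "l \<in> S (val l) (leaves l - 1)" "r \<in> S (val r) (n - (leaves l - 1))"
    by (simp_all add: S_def)
  then have "(l, r) \<in> (\<Union>i\<in>{..n}. \<Union>p\<in>UNIV. \<Union>q\<in>UNIV.
      (if wop p q = v then S p i \<times> S q (n - i) else {}))"
    using \<open>wop (val l) (val r) = v\<close>
    by (intro UN_I[where a="leaves l - 1"] UN_I[where a="val l"] UN_I[where a="val r"]) simp_all
  then show "t \<in> case_prod Node ` (\<Union>i\<in>{..n}. \<Union>p\<in>UNIV. \<Union>q\<in>UNIV.
      (if wop p q = v then S p i \<times> S q (n - i) else {}))" using tn by blast
next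
  fix t assume "t \<in> case_prod Node ` (\<Union>i\<in>{..n}. \<Union>p\<in>UNIV. \<Union>q\<in>UNIV.
      (if wop p q = v then S p i \<times> S q (n - i) else {}))"
  then obtain lr i p q where lr: "t = case_prod Node lr" "i \<le> n"
    "lr \<in> (if wop p q = v then S p i \<times> S q (n - i) else {})"
    by (elim imageE UN_E) (simp only: atMost_iff)
  then have "wop p q = v" "fst lr \<in> S p i" "snd lr \<in> S q (n-i)"
    by (simp_all split: if_splits add: mem_Times_iff)
  with lr show "t \<in> S v (Suc n)"
    by (cases lr) (simp add: S_def)
qed

lemma card_UN_key:
  assumes "finite I" "\<forall>i\<in>I. finite (A i)" "\<forall>i\<in>I. \<forall>x\<in>A i. f x = i"
  shows "card (\<Union>i\<in>I. A i) = (\<Sum>i\<in>I. card (A i))"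
  proof (rule card_UN_disjoint)
  show "\<forall>i\<in>I. \<forall>j\<in>I. i \<noteq> j \<longrightarrow> A i \<inter> A j = {}"
  proof (intro ballI impI)
    fix i j assume "i \<in> I" "j \<in> I" "i \<noteq> j"
    show "A i \<inter> A j = {}"
    proof (rule equals0I)
      fix x assume "x \<in> A i \<inter> A j"
      then have "x \<in> A i" "x \<in> A j" by auto
      then have "f x = i" "f x = j" using assms(3) \<open>i \<in> I\<close> \<open>j \<in> I\<close> by blast+
      then show False using \<open>i \<noteq> j\<close> by simp
    qed
  qed
qed (use assms in auto)

lemma cnt_Suc:
  "cnt v (Suc n) = (\<Sum>i\<le>n. \<Sum>p\<in>UNIV. \<Sum>q\<in>UNIV.
      (if wop p q = v then cnt p i * cnt q (n - i) else 0))"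
proof -
  have inj: "inj (case_prod Node)" by (auto simp: inj_def)
  have "cnt v (Suc n) = card (\<Union>i\<in>{..n}. \<Union>p\<in>UNIV. \<Union>q\<in>UNIV.
      (if wop p q = v then S p i \<times> S q (n - i) else {}))"
    unfolding cnt_def S_Suc by (rule card_image[OF inj_on_subset[OF inj]]) simp
  also have "\<dots> = (\<Sum>i\<le>n. card (\<Union>p\<in>UNIV. \<Union>q\<in>UNIV.
      (if wop p q = v then S p i \<times> S q (n - i) else {})))"
    by (rule card_UN_key[where f="\<lambda>x. leaves (fst x) - 1"]) (simp, (intro ballI finite_UN_I; simp add: finite_S), fastforce simp: S_def split: if_splits)
  also have "\<dots> = (\<Sum>i\<le>n. \<Sum>p\<in>UNIV. card (\<Union>q\<in>UNIV.
      (if wop p q = v then S p i \<times> S q (n - i) else {})))"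
    by (intro sum.cong refl card_UN_key[where f="\<lambda>x. val (fst x)"]) (simp, (intro ballI finite_UN_I; simp add: finite_S), fastforce simp: S_def split: if_splits)
  also have "\<dots> = (\<Sum>i\<le>n. \<Sum>p\<in>UNIV. \<Sum>q\<in>UNIV. card
      (if wop p q = v then S p i \<times> S q (n - i) else {}))"
    by (intro sum.cong refl card_UN_key[where f="\<lambda>x. val (snd x)"]) (simp, (intro ballI finite_UN_I; simp add: finite_S), fastforce simp: S_def split: if_splits)
  also have "\<dots> = (\<Sum>i\<le>n. \<Sum>p\<in>UNIV. \<Sum>q\<in>UNIV.
      (if wop p q = v then cnt p i * cnt q (n - i) else 0))"
    by (intro sum.cong refl) (simp add: cnt_def card_cartesian_product)
  finally show ?thesis .
qed


section \<open>Generating functions of the tree counts\<close>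

unbundle fps_syntax

definition Af :: "int fps" where "Af = Abs_fps (\<lambda>n. int (cnt True n))"
definition Bf :: "int fps" where "Bf = Abs_fps (\<lambda>n. int (cnt False n))"

lemma Af_eq: "Af = fps_X * (Af*Af + Af*Bf + Bf*Bf)"
proof (rule fps_ext)
  fix n show "Af $ n = (fps_X * (Af*Af + Af*Bf + Bf*Bf)) $ n"
  proof (cases n)
    case 0 then show ?thesis by (simp add: Af_def cnt0)
  next
    case (Suc m)
    have "(Af*Af + Af*Bf + Bf*Bf) $ m = Af $ Suc m"
      by (simp add: Af_def Bf_def cnt_Suc fps_mult_nth UNIV_bool wop_def sum.distrib
          atLeast0AtMost)
    then show ?thesis using Suc by simp
  qed
qed

lemma Bf_eq: "Bf = 1 + fps_X * Bf * Af"
proof (rule fps_ext)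
  fix n show "Bf $ n = (1 + fps_X * Bf * Af) $ n"
  proof (cases n)
    case 0 then show ?thesis by (simp add: Bf_def cnt0)
  next
    case (Suc m)
    have "(Bf * Af) $ m = Bf $ Suc m"
      by (simp add: Af_def Bf_def cnt_Suc fps_mult_nth UNIV_bool wop_def sum.distrib
          atLeast0AtMost)
    then show ?thesis using Suc by (simp add: mult.assoc)
  qed
qed


lemma alg:
  fixes x a b :: "'a::idom"
  assumes hA: "a = x*(a*a+a*b+b*b)" and hB: "b = 1 + x*b*a"
  defines "p1 \<equiv> x*(a+b)*b" and "p2 \<equiv> x*b*b"
  defines "r2 \<equiv> p1*p1 + p2"
  defines "r3 \<equiv> p1*r2 + p2*p1"
  defines "r4 \<equiv> p1*r3 + p2*r2"
  defines "r5 \<equiv> p1*r4 + p2*r3"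
  shows "a = r2" "p1 = x*(1 + r2 + r3)" "r2 = x*(1 + p1 + r3 + r4)"
    and "r3 = x*(p1 + r2 + r4 + r5)"
  using hA hB unfolding p1_def p2_def r2_def r3_def r4_def r5_def by algebra+

definition P1 :: "int fps" where "P1 = fps_X * (Af + Bf) * Bf"
definition P2 :: "int fps" where "P2 = fps_X * Bf * Bf"

fun R :: "nat \<Rightarrow> int fps" where
  "R 0 = 1"
| "R (Suc 0) = P1"
| "R (Suc (Suc m)) = P1 * R (Suc m) + P2 * R m"

lemmas alg_inst = alg[OF Af_eq Bf_eq, folded P1_def P2_def]

lemma R_e: "R (j + 2) = P1 * R (j + 1) + P2 * R j"
proof -
  have "j + 2 = Suc (Suc j)" "j + 1 = Suc j" by simp_all
  then show ?thesis by simp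
qed

lemma R_e': "a = j + 2 \<Longrightarrow> b = j + 1 \<Longrightarrow> R a = P1 * R b + P2 * R j"
  using R_e by simp

lemma R_facts:
  "Af = R 2" "R 1 = fps_X * (1 + R 2 + R 3)" "R 2 = fps_X * (R 0 + R 1 + R 3 + R 4)"
  "R 3 = fps_X * (R 1 + R 2 + R 4 + R 5)"
proof -
  have r0: "R 0 = 1" and r1: "R 1 = P1" by simp_all
  have "R 2 = P1 * R 1 + P2 * R 0" by (rule R_e') simp_all
  then have r2: "R 2 = P1 * P1 + P2" unfolding r0 r1 by simp
  have r3: "R 3 = P1 * R 2 + P2 * R 1" by (rule R_e') simp_all
  have r4: "R 4 = P1 * R 3 + P2 * R 2" by (rule R_e') simp_all
  have r5: "R 5 = P1 * R 4 + P2 * R 3" by (rule R_e') simp_all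
  show "Af = R 2" unfolding r2 by (rule alg_inst(1))
  show "R 1 = fps_X * (1 + R 2 + R 3)" unfolding r3 r2 r1 by (rule alg_inst(2))
  show "R 2 = fps_X * (R 0 + R 1 + R 3 + R 4)" unfolding r4 r3 r2 r1 r0 by (rule alg_inst(3))
  show "R 3 = fps_X * (R 1 + R 2 + R 4 + R 5)" unfolding r5 r4 r3 r2 r1 by (rule alg_inst(4))
qed

lemma R_step: "R (k+2) = fps_X * (R k + R (k+1) + R (k+3) + R (k+4))"
proof -
  have "R (k+2) = fps_X * (R k + R (k+1) + R (k+3) + R (k+4)) \<and>
        R (k+3) = fps_X * (R (k+1) + R (k+2) + R (k+4) + R (k+5))"
  proof (induction k)
    case 0
    show ?case unfolding add_0_left by (rule conjI[OF R_facts(3) R_facts(4)])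
  next
    case (Suc k)
    have ix: "Suc k + 1 = k+2" "Suc k + 2 = k + 3" "Suc k + 3 = k+4" "Suc k + 4 = k+5"
      "Suc k + 5 = k + 6" by simp_all
    have ix2: "Suc k = k + 1" by simp
    have h2: "R (k+2) = fps_X * (R k + R (k+1) + R (k+3) + R (k+4))"
     and h3: "R (k+3) = fps_X * (R (k+1) + R (k+2) + R (k+4) + R (k+5))" using Suc.IH by blast+
    have e2: "R (k+2) = P1 * R (k+1) + P2 * R k" by (rule R_e)
    have e3: "R (k+3) = P1 * R (k+2) + P2 * R (k+1)" by (rule R_e') simp_all
    have e4: "R (k+4) = P1 * R (k+3) + P2 * R (k+2)" by (rule R_e') simp_all
    have e5: "R (k+5) = P1 * R (k+4) + P2 * R (k+3)" by (rule R_e') simp_all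
    have e6: "R (k+6) = P1 * R (k+5) + P2 * R (k+4)" by (rule R_e') simp_all
    have g: "R (k+4) = fps_X * (R (k+2) + R (k+3) + R (k+5) + R (k+6))"
      using h2 h3 e2 e3 e4 e5 e6 by algebra
    show ?case unfolding ix unfolding ix2 using h3 g by blast
  qed
  then show ?thesis by blast
qed

lemma R_nth0: "R m $ 0 = (if m = 0 then 1 else 0)"
  by (induction m rule: R.induct) (simp_all add: P1_def P2_def)


section \<open>Walks\<close>

fun W :: "nat \<Rightarrow> int \<Rightarrow> nat" where
  "W 0 k = (if k = 0 then 1 else 0)"
| "W (Suc n) k = (if 1 \<le> k then W n (k-2) + W n (k-1) + W n (k+1) + W n (k+2) else 0)"

definition Rz :: "int \<Rightarrow> int fps" where
  "Rz k = (if k < 0 then 0 else R (nat k))"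

lemma Rz_step: "1 \<le> k \<Longrightarrow> Rz k = fps_X * (Rz (k-2) + Rz (k-1) + Rz (k+1) + Rz (k+2))"
proof -
  assume k: "1 \<le> k"
  show ?thesis
  proof (cases "k = 1")
    case True
    then show ?thesis using R_facts(2) by (simp add: Rz_def)
  next
    case False
    with k have "k \<ge> 2" by simp
    then obtain m where m: "k = int m + 2" by (intro that[of "nat (k-2)"]) simp
    have a: "nat (int m + 2) = m + 2" "nat (int m + 2 - 2) = m" "nat (int m + 2 - 1) = m + 1"
      "nat (int m + 2 + 1) = m + 3" "nat (int m + 2 + 2) = m + 4" by simp_all
    show ?thesis unfolding m Rz_def using R_step[of m] by (simp only: a) simp
  qed
qed

lemma R_nth0': "R m $ 0 = (if m = 0 then 1 else 0)"
  by (rule R_nth0)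

lemma W_Rz: "int (W n k) = Rz k $ n"
proof (induction n arbitrary: k)
  case 0
  then show ?case by (simp add: Rz_def R_nth0)
next
  case (Suc n)
  show ?case
  proof (cases "1 \<le> k")
    case True
    have "Rz k $ Suc n = (Rz (k-2) + Rz (k-1) + Rz (k+1) + Rz (k+2)) $ n"
      by (subst Rz_step[OF True]) simp
    then show ?thesis using True Suc.IH by simp
  next
    case False
    then show ?thesis by (simp add: Rz_def)
  qed
qed


definition wk :: "nat \<Rightarrow> int \<Rightarrow> int list set" where
  "wk n k = {ys. length ys = n + 1 \<and> ys ! 0 = 0 \<and> ys ! n = k
     \<and> (\<forall>i\<in>{1..n}. ys ! i - ys ! (i - 1) \<in> {-2, -1, 1, 2} \<and> ys ! i \<ge> 1)}"

lemma wk0: "wk 0 k = (if k = 0 then {[0]} else {})"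
proof (rule set_eqI)
  fix ys :: "int list"
  have "length ys = 1 \<longleftrightarrow> ys = [ys ! 0]"
    by (cases ys) auto
  then show "ys \<in> wk 0 k \<longleftrightarrow> ys \<in> (if k = 0 then {[0]} else {})"
    unfolding wk_def by (cases "k = 0") auto
qed

lemma wk_nth: "ys \<in> wk n k \<Longrightarrow> ys ! n = k"
  by (simp add: wk_def)

lemma wk_Suc: "wk (Suc n) k = (if 1 \<le> k then (\<lambda>ys. ys @ [k]) `
   (wk n (k-2) \<union> wk n (k-1) \<union> wk n (k+1) \<union> wk n (k+2)) else {})"
proof (intro equalityI subsetI)
  fix ys assume ys: "ys \<in> wk (Suc n) k"
  have len: "length ys = n + 2" and y0: "ys ! 0 = 0" and yn: "ys ! Suc n = k"
    and st: "\<And>i. i \<in> {1..Suc n} \<Longrightarrow> ys ! i - ys ! (i - 1) \<in> {-2, -1, 1, 2} \<and> ys ! i \<ge> 1"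
    using ys by (auto simp: wk_def)
  define zs where "zs = butlast ys"
  have yz: "ys = zs @ [k]"
    using len yn unfolding zs_def
    by (metis append_butlast_last_id diff_Suc_1 last_conv_nth length_greater_0_conv
        add_2_eq_Suc' zero_less_Suc)
  have lz: "length zs = n + 1" using len by (simp add: zs_def)
  have zi: "zs ! i = ys ! i" if "i \<le> n" for i
    using that lz yz by (simp add: nth_append)
  have k1: "1 \<le> k" using st[of "Suc n"] yn by simp
  have d: "k - zs ! n \<in> {-2, -1, 1, 2}" using st[of "Suc n"] yn zi[of n] by simp
  have "\<forall>i\<in>{1..n}. zs ! i - zs ! (i - 1) \<in> {-2, -1, 1, 2} \<and> zs ! i \<ge> 1"
  proof
    fix i assume i: "i \<in> {1..n}"
    then have "i \<in> {1..Suc n}" by simp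
    then show "zs ! i - zs ! (i - 1) \<in> {-2, -1, 1, 2} \<and> zs ! i \<ge> 1"
      using st[of i] zi[of i] zi[of "i-1"] i by simp
  qed
  then have "zs \<in> wk n (zs ! n)"
    unfolding wk_def using lz y0 zi[of 0] by simp
  moreover have "zs ! n \<in> {k-2, k-1, k+1, k+2}" using d by auto
  ultimately have "zs \<in> wk n (k-2) \<union> wk n (k-1) \<union> wk n (k+1) \<union> wk n (k+2)" by auto
  then show "ys \<in> (if 1 \<le> k then (\<lambda>ys. ys @ [k]) `
   (wk n (k-2) \<union> wk n (k-1) \<union> wk n (k+1) \<union> wk n (k+2)) else {})"
    using k1 yz by simp
next
  fix ys assume ys: "ys \<in> (if 1 \<le> k then (\<lambda>ys. ys @ [k]) `
   (wk n (k-2) \<union> wk n (k-1) \<union> wk n (k+1) \<union> wk n (k+2)) else {})"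
  then have k1: "1 \<le> k" by (simp split: if_splits)
  with ys obtain zs j where yz: "ys = zs @ [k]" and zj: "zs \<in> wk n j" and j: "j \<in> {k-2, k-1, k+1, k+2}"
    by auto
  have lz: "length zs = n + 1" and z0: "zs ! 0 = 0" and zn: "zs ! n = j"
    and st: "\<And>i. i \<in> {1..n} \<Longrightarrow> zs ! i - zs ! (i - 1) \<in> {-2, -1, 1, 2} \<and> zs ! i \<ge> 1"
    using zj by (auto simp: wk_def)
  have yi: "ys ! i = zs ! i" if "i \<le> n" for i
    using that lz yz by (simp add: nth_append)
  have ysn: "ys ! Suc n = k" using yz lz by (simp add: nth_append)
  have "\<forall>i\<in>{1..Suc n}. ys ! i - ys ! (i - 1) \<in> {-2, -1, 1, 2} \<and> ys ! i \<ge> 1"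
  proof
    fix i assume i: "i \<in> {1..Suc n}"
    show "ys ! i - ys ! (i - 1) \<in> {-2, -1, 1, 2} \<and> ys ! i \<ge> 1"
    proof (cases "i = Suc n")
      case True
      then show ?thesis using ysn yi[of n] zn j k1 by auto
    next
      case False
      then have "i \<le> n" using i by simp
      then show ?thesis using st[of i] yi[of i] yi[of "i-1"] i by simp
    qed
  qed
  then show "ys \<in> wk (Suc n) k"
    unfolding wk_def using yz lz z0 yi[of 0] ysn by simp
qed

lemma wk_card: "finite (wk n k) \<and> card (wk n k) = W n k"
proof (induction n arbitrary: k)
  case 0
  then show ?case by (simp add: wk0)
next
  case (Suc n)
  show ?case
  proof (cases "1 \<le> k")
    case False
    then show ?thesis by (simp add: wk_Suc)
  next
    case True
    have inj: "inj (\<lambda>ys::int list. ys @ [k])" by (simp add: inj_def)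
    have fin: "finite (wk n j)" for j using Suc.IH by blast
    have dis: "wk n a \<inter> wk n b = {}" if "a \<noteq> b" for a b
      using that wk_nth by blast
    have "card (wk n (k-2) \<union> wk n (k-1) \<union> wk n (k+1) \<union> wk n (k+2))
       = card (wk n (k-2)) + card (wk n (k-1)) + card (wk n (k+1)) + card (wk n (k+2))"
      by (simp add: card_Un_disjoint fin dis Int_Un_distrib2)
    then show ?thesis using True Suc.IH fin
      by (simp add: wk_Suc card_image[OF inj_on_subset[OF inj]])
  qed
qed

theorem proposition5p4:
  fixes n :: nat
  shows "card {t. leaves t = n + 1 \<and> val t} = card (walks n)"
proof -
  have "walks n = wk n 2" by (simp add: walks_def wk_def)
  then have "int (card (walks n)) = Rz 2 $ n" using wk_card W_Rz by simp
  also have "\<dots> = Af $ n" by (simp add: Rz_def R_facts(1))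
  also have "\<dots> = int (card {t. leaves t = n + 1 \<and> val t})"
    by (simp add: Af_def cnt_def S_def)
  finally show ?thesis by simp
qed

end
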